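(* Let $p\in(0,1)$ and $\Phi(a,s)=p(1-p)(2-s)^2(s-a)-a(1-s)$. Let $f(x)=(2-x)^{2-x}p(1-p)^{1-x}(1-x)^{x-1}$ for $x\le1$ (with $0^0=1$). (a) For each $a\in[0,1]$ there is a unique $s\in[a,1]$ with $\Phi(a,s)=0$; denote it $\phi(a)$. If $a\in\{0,1\}$ then $\phi(a)=a$; if $a\in(0,1)$ then $0<a<\phi(a)<1$. (b) For $a\in(0,1)$, if $s=\phi(a)$ then $\dfrac{s f(s)^{a/s}}{a^{a/s}(s-a)^{1-a/s}}=\dfrac{s}{s-a}\left(\dfrac{1-s}{(1-p)(2-s)}\right)^a$. (c) $\phi$ is increasing on $[0,1]$ and differentiable on $(0,1)$. (d) $\phi$ is invertible and $\phi^{-1}$ is increasing; if $s\in\{0,1\}$ then $\phi^{-1}(s)=s$; if $s\in(0,1)$ then $0<\phi^{-1}(s)<s<1$. *)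

theory Defs
  imports Complex_Main
begin

definition rpow :: "real \<Rightarrow> real \<Rightarrow> real" where
  "rpow b e = (if b = 0 then (if e = 0 then 1 else 0) else b powr e)"

definition Phi :: "real \<Rightarrow> real \<Rightarrow> real \<Rightarrow> real" where
  "Phi p a s = p * (1 - p) * (2 - s)^2 * (s - a) - a * (1 - s)"

definition f :: "real \<Rightarrow> real \<Rightarrow> real" where
  "f p x = rpow (2 - x) (2 - x) * p * rpow (1 - p) (1 - x) * rpow (1 - x) (x - 1)"

definition phi :: "real \<Rightarrow> real \<Rightarrow> real" where
  "phi p a = (THE s. s \<in> {a..1} \<and> Phi p a s = 0)"

end

theory Submission imports Defs begin

definition psi :: "real \<Rightarrow> real \<Rightarrow> real" where
  "psi p s = p*(1-p)*(2-s)^2*s / (p*(1-p)*(2-s)^2 + 1 - s)"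

lemma D_pos: "0<(p::real) \<Longrightarrow> p<1 \<Longrightarrow> s \<le> 1 \<Longrightarrow> p*(1-p)*(2-s)^2 + 1 - s > 0"
proof -
  assume "0<p" "p<1" "s\<le>1"
  have "p*(1-p) > 0" using \<open>0<p\<close> \<open>p<1\<close> by (intro mult_pos_pos) auto
  moreover have "(2-s)^2 > 0" using \<open>s\<le>1\<close> by simp
  ultimately have "p*(1-p)*(2-s)^2 > 0" by simp
  thus ?thesis using \<open>s\<le>1\<close> by linarith
qed

lemma Phi_iff: "0<p \<Longrightarrow> p<1 \<Longrightarrow> s \<le> 1 \<Longrightarrow> Phi p a s = 0 \<longleftrightarrow> a = psi p s"
proof -
  assume h: "0<p" "p<1" "s\<le>1"
  note D = D_pos[OF h]
  have "Phi p a s = p*(1-p)*(2-s)^2*s - a*(p*(1-p)*(2-s)^2 + 1 - s)"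
    unfolding Phi_def by (simp add: algebra_simps)
  thus ?thesis using D unfolding psi_def by (auto simp: field_simps)
qed

lemma psi_deriv: "0<p \<Longrightarrow> p<1 \<Longrightarrow> s \<le> 1 \<Longrightarrow> \<exists>y. DERIV (psi p) s :> y \<and> y > 0"
proof -
  assume h: "0<p" "p<1" "s\<le>1"
  define q where "q = p*(1-p)"
  have q: "q > 0" using h unfolding q_def by (simp add: mult_pos_pos)
  define D where "D = q*(2-s)^2 + 1 - s"
  have Dp: "D > 0" using D_pos[OF h] unfolding D_def q_def by simp
  have e: "psi p = (\<lambda>s. q*(2-s)^2*s / (q*(2-s)^2 + 1 - s))" unfolding psi_def q_def by auto
  have "DERIV (\<lambda>s. q*(2-s)^2*s / (q*(2-s)^2 + 1 - s)) s :>
     ((q*(2*(2-s)*(-1))*s + q*(2-s)^2) * D - q*(2-s)^2*s*(q*(2*(2-s)*(-1)) - 1)) / D^2"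
    unfolding D_def using Dp[unfolded D_def]
    by (auto intro!: derivative_eq_intros simp: power2_eq_square algebra_simps)
  moreover have "((q*(2*(2-s)*(-1))*s + q*(2-s)^2) * D - q*(2-s)^2*s*(q*(2*(2-s)*(-1)) - 1))
      = q*(2-s)*(q*(2-s)^3 + 2 - 3*s + 2*s^2)"
    unfolding D_def by (simp add: algebra_simps power2_eq_square power3_eq_cube)
  moreover have "q*(2-s)*(q*(2-s)^3 + 2 - 3*s + 2*s^2) > 0"
  proof -
    have "(2-s)^3 > 0" using h by simp
    hence "q*(2-s)^3 > 0" using q by simp
    moreover have "2 - 3*s + 2*s^2 = 2*(s-3/4)^2 + 7/8" by (simp add: algebra_simps power2_eq_square)
    hence "2 - 3*s + 2*s^2 > 0" using zero_le_power2[of "s-3/4"] by linarith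
    ultimately have "q*(2-s)^3 + 2 - 3*s + 2*s^2 > 0" by linarith
    moreover have "q*(2-s) > 0" using q h by simp
    ultimately show ?thesis by (metis mult.assoc mult_pos_pos)
  qed
  ultimately show ?thesis using Dp unfolding e by (intro exI[of _ "_ / D^2"]) auto
qed

context fixes p :: real assumes p0: "0<p" and p1: "p<1"
begin

lemma psi_mono: "0 \<le> s \<Longrightarrow> s < t \<Longrightarrow> t \<le> 1 \<Longrightarrow> psi p s < psi p t"
  by (rule DERIV_pos_imp_increasing) (use psi_deriv[OF p0 p1] in auto)

lemma psi_le: "0 \<le> s \<Longrightarrow> s \<le> t \<Longrightarrow> t \<le> 1 \<Longrightarrow> psi p s \<le> psi p t"
  using psi_mono by (cases "s = t") (auto intro: less_imp_le)

lemma psi0: "psi p 0 = 0" unfolding psi_def by simp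

lemma psi1: "psi p 1 = 1" using p0 p1 unfolding psi_def by simp

lemma psi_lt: "0 < s \<Longrightarrow> s < 1 \<Longrightarrow> 0 < psi p s \<and> psi p s < s"
proof -
  assume s: "0 < s" "s < 1"
  define q where "q = p*(1-p)"
  have q: "q > 0" using p0 p1 unfolding q_def by (simp add: mult_pos_pos)
  have a: "q*(2-s)^2 > 0" using q s by simp
  have D: "q*(2-s)^2 + 1 - s > 0" using a s by linarith
  have "psi p s = q*(2-s)^2*s / (q*(2-s)^2 + 1 - s)" unfolding psi_def q_def by simp
  moreover have "q*(2-s)^2*s / (q*(2-s)^2 + 1 - s) > 0" using a s D by simp
  moreover have "q*(2-s)^2*s < s * (q*(2-s)^2 + 1 - s)" using s by (simp add: algebra_simps)
  hence "q*(2-s)^2*s / (q*(2-s)^2 + 1 - s) < s" using D by (simp add: divide_less_eq)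
  ultimately show ?thesis by simp
qed

lemma psi_le_self: "0 \<le> s \<Longrightarrow> s \<le> 1 \<Longrightarrow> 0 \<le> psi p s \<and> psi p s \<le> s"
  using psi_lt psi0 psi1 by (cases "s = 0 \<or> s = 1") (auto simp: less_eq_real_def)

lemma psi_cont: "continuous_on {0..1} (psi p)"
  by (rule continuous_at_imp_continuous_on) (use psi_deriv[OF p0 p1] DERIV_isCont in force)

lemma ex_psi: "0 \<le> a \<Longrightarrow> a \<le> 1 \<Longrightarrow> \<exists>s. 0 \<le> s \<and> s \<le> 1 \<and> psi p s = a"
  using IVT'[of "psi p" 0 a 1] psi0 psi1 psi_cont by auto

lemma psi_inj: "0 \<le> s \<Longrightarrow> s \<le> 1 \<Longrightarrow> 0 \<le> t \<Longrightarrow> t \<le> 1 \<Longrightarrow> psi p s = psi p t \<Longrightarrow> s = t"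
  using psi_mono by (metis linorder_neq_iff order_less_irrefl)

lemma uniq: "0 \<le> a \<Longrightarrow> a \<le> 1 \<Longrightarrow> \<exists>!s. s \<in> {a..1} \<and> Phi p a s = 0"
proof -
  assume a: "0 \<le> a" "a \<le> 1"
  obtain s where s: "0 \<le> s" "s \<le> 1" "psi p s = a" using ex_psi[OF a] by blast
  have "a \<le> s" using psi_le_self[OF s(1,2)] s(3) by simp
  hence ex: "s \<in> {a..1} \<and> Phi p a s = 0" using s Phi_iff[OF p0 p1] by auto
  show ?thesis
  proof (rule ex1I[of _ s])
    show "s \<in> {a..1} \<and> Phi p a s = 0" by (rule ex)
  next
    fix t assume t: "t \<in> {a..1} \<and> Phi p a t = 0"
    hence "psi p t = a" using Phi_iff[OF p0 p1] by auto
    thus "t = s" using psi_inj[of t s] s t a by auto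
  qed
qed

lemma phi_prop: "0 \<le> a \<Longrightarrow> a \<le> 1 \<Longrightarrow> phi p a \<in> {a..1} \<and> psi p (phi p a) = a"
proof -
  assume a: "0 \<le> a" "a \<le> 1"
  have "phi p a \<in> {a..1} \<and> Phi p a (phi p a) = 0"
    unfolding phi_def by (rule theI'[OF uniq[OF a]])
  thus ?thesis using Phi_iff[OF p0 p1] by auto
qed

lemma phi_psi: "0 \<le> s \<Longrightarrow> s \<le> 1 \<Longrightarrow> phi p (psi p s) = s"
proof -
  assume s: "0 \<le> s" "s \<le> 1"
  have a: "0 \<le> psi p s" "psi p s \<le> 1" using psi_le_self[OF s] s by auto
  show ?thesis unfolding phi_def
    by (rule the1_equality[OF uniq[OF a]]) (use psi_le_self[OF s] s Phi_iff[OF p0 p1] in auto)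
qed

lemma phi_range: "0 \<le> a \<Longrightarrow> a \<le> 1 \<Longrightarrow> 0 \<le> phi p a \<and> phi p a \<le> 1"
  using phi_prop[of a] by auto

lemma phi_open: "0 < a \<Longrightarrow> a < 1 \<Longrightarrow> 0 < a \<and> a < phi p a \<and> phi p a < 1"
proof -
  assume a: "0 < a" "a < 1"
  have h: "phi p a \<in> {a..1}" "psi p (phi p a) = a" using phi_prop[of a] a by auto
  have "phi p a \<noteq> 1" using h psi1 a by auto
  moreover have "phi p a \<noteq> a" using h psi_lt[of a] a by auto
  ultimately show ?thesis using h a by auto
qed

lemma phi_smono: "strict_mono_on {0..1} (phi p)"
proof (rule strict_mono_onI)
  fix r s :: real assume h: "r \<in> {0..1}" "s \<in> {0..1}" "r < s"
  show "phi p r < phi p s"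
  proof (rule ccontr)
    assume "\<not> phi p r < phi p s"
    hence "phi p s \<le> phi p r" by simp
    hence "psi p (phi p s) \<le> psi p (phi p r)" using psi_le phi_range h by auto
    thus False using phi_prop h by auto
  qed
qed

lemma phi_inj: "inj_on (phi p) {0..1}"
  using phi_smono strict_mono_on_imp_inj_on by blast

lemma phi_bij: "bij_betw (phi p) {0..1} {0..1}"
proof -
  have "phi p ` {0..1} = {0..1}"
  proof
    show "phi p ` {0..1} \<subseteq> {0..1}" using phi_range by auto
    show "{0..1} \<subseteq> phi p ` {0..1}"
    proof
      fix s :: real assume s: "s \<in> {0..1}"
      have "psi p s \<in> {0..1}" using psi_le_self s by force
      moreover have "phi p (psi p s) = s" using phi_psi s by auto
      ultimately show "s \<in> phi p ` {0..1}" by force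
    qed
  qed
  thus ?thesis using phi_inj unfolding bij_betw_def by blast
qed

lemma inv_eq: "s \<in> {0..1} \<Longrightarrow> the_inv_into {0..1} (phi p) s = psi p s"
proof (rule the_inv_into_f_eq[OF phi_inj])
  assume s: "s \<in> {0..1}"
  show "phi p (psi p s) = s" using phi_psi s by auto
  show "psi p s \<in> {0..1}" using psi_le_self[of s] s by auto
qed

lemma phi_diff: "0 < a \<Longrightarrow> a < 1 \<Longrightarrow> phi p differentiable (at a)"
proof -
  assume a: "0 < a" "a < 1"
  have c: "continuous_on (psi p ` {0..1}) (phi p)"
    by (rule continuous_on_inv[OF psi_cont compact_Icc]) (use phi_psi in auto)
  have "psi p ` {0..1} = {0..1}"
  proof
    show "psi p ` {0..1} \<subseteq> {0..1}" using psi_le_self by force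
    show "{0..1} \<subseteq> psi p ` {0..1}"
    proof
      fix a :: real assume "a \<in> {0..1}"
      thus "a \<in> psi p ` {0..1}" using phi_prop[of a] phi_range[of a]
        by (metis atLeastAtMost_iff image_eqI)
    qed
  qed
  hence c': "continuous_on {0..1} (phi p)" using c by simp
  have "continuous_on {0<..<1} (phi p)" by (rule continuous_on_subset[OF c']) auto
  hence ic: "isCont (phi p) a" using a continuous_on_eq_continuous_at[of "{0<..<1::real}" "phi p"] by simp
  obtain D where D: "DERIV (psi p) (phi p a) :> D" "D > 0"
    using psi_deriv[OF p0 p1, of "phi p a"] phi_open[OF a] by auto
  have "DERIV (phi p) a :> inverse D"
    by (rule DERIV_inverse_function[OF D(1) _ a(1) a(2) _ ic])
       (use D(2) phi_prop in auto)
  thus ?thesis unfolding differentiable_def has_field_derivative_def by blast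
qed

lemma partb: "0 < a \<Longrightarrow> a < 1 \<Longrightarrow> s = phi p a \<Longrightarrow>
   s * rpow (f p s) (a / s) / (rpow a (a / s) * rpow (s - a) (1 - a / s))
          = s / (s - a) * rpow ((1 - s) / ((1 - p) * (2 - s))) a"
proof -
  assume a: "0 < a" "a < 1" and sd: "s = phi p a"
  have s: "a < s" "s < 1" using phi_open[OF a] sd by auto
  have "Phi p a s = 0" using phi_prop[of a] a sd Phi_iff[OF p0 p1, of s a] s by auto
  hence ph: "p*(1-p)*(2-s)^2*(s-a) = a*(1-s)" unfolding Phi_def by simp
  have q: "p*(1-p)*(2-s)^2 > 0" using p0 p1 s by (simp add: mult_pos_pos)
  have sa: "s - a = a*(1-s) / (p*(1-p)*(2-s)^2)"
  proof -
    have "s - a = (s-a) * (p*(1-p)*(2-s)^2) / (p*(1-p)*(2-s)^2)"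
      using q by (intro nonzero_mult_div_cancel_right[symmetric]) linarith
    also have "(s-a) * (p*(1-p)*(2-s)^2) = a*(1-s)" using ph by (simp only: mult.commute)
    finally show ?thesis .
  qed
  define F where "F = (2-s) powr (2-s) * p * (1-p) powr (1-s) * (1-s) powr (s-1)"
  have fF: "f p s = F" unfolding f_def F_def rpow_def using s p1 by auto
  have Fp: "F > 0" unfolding F_def using s p0 p1 by simp
  define X where "X = (1 - s) / ((1 - p) * (2 - s))"
  have Xp: "X > 0" unfolding X_def using s p1 by simp
  have lnF: "ln F = (2-s)*ln(2-s) + ln p + (1-s)*ln(1-p) + (s-1)*ln(1-s)"
    unfolding F_def using s p0 p1 by (simp add: ln_mult ln_powr)
  have lnsa: "ln (s-a) = ln a + ln(1-s) - (ln p + ln (1-p) + 2*ln(2-s))"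
  proof -
    have "ln (s-a) = ln (a*(1-s)) - ln (p*(1-p)*(2-s)^2)"
      unfolding sa using a s q p0 p1 by (simp add: ln_div)
    also have "\<dots> = ln a + ln(1-s) - (ln p + ln (1-p) + 2*ln(2-s))"
      using a s p0 p1 by (simp add: ln_mult ln_realpow)
    finally show ?thesis .
  qed
  have lnX: "ln X = ln(1-s) - (ln(1-p) + ln(2-s))"
    unfolding X_def using s p1 by (simp add: ln_div ln_mult)
  have K: "ln F + ln (s-a) - ln a = s * ln X"
    unfolding lnF lnsa lnX by (simp add: algebra_simps)
  have L: "rpow (f p s) (a / s) = F powr (a/s)" "rpow a (a/s) = a powr (a/s)"
     "rpow (s - a) (1 - a / s) = (s-a) powr (1 - a/s)"
     "rpow ((1 - s) / ((1 - p) * (2 - s))) a = X powr a"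
    unfolding rpow_def fF X_def using Fp a s by auto
  have lhs_pos: "s * F powr (a/s) / (a powr (a/s) * (s-a) powr (1 - a/s)) > 0"
    using s a Fp by simp
  have rhs_pos: "s / (s - a) * X powr a > 0" using s a Xp by simp
  have "ln (s * F powr (a/s) / (a powr (a/s) * (s-a) powr (1 - a/s)))
     = ln s + (a/s) * ln F - ((a/s) * ln a + (1 - a/s) * ln (s-a))"
    using s a Fp by (simp add: ln_div ln_mult ln_powr)
  also have "\<dots> = ln s - ln (s-a) + (a/s) * (ln F + ln (s-a) - ln a)"
    by (simp add: algebra_simps)
  also have "\<dots> = ln s - ln (s-a) + a * ln X" unfolding K using s a by simp
  also have "\<dots> = ln (s / (s - a) * X powr a)"
    using s a Xp by (simp add: ln_div ln_mult ln_powr)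
  finally have "s * F powr (a/s) / (a powr (a/s) * (s-a) powr (1 - a/s)) = s / (s - a) * X powr a"
    using lhs_pos rhs_pos by (simp add: ln_inj_iff)
  thus ?thesis unfolding L .
qed

end

theorem lemma14:
  fixes p :: real
  assumes "0 < p" and "p < 1"
  shows
    "(\<forall>a\<in>{0..1}. \<exists>!s. s \<in> {a..1} \<and> Phi p a s = 0)
     \<and> (\<forall>a\<in>{0,1}. phi p a = a)
     \<and> (\<forall>a\<in>{0<..<1}. 0 < a \<and> a < phi p a \<and> phi p a < 1)
     \<and> (\<forall>a\<in>{0<..<1}. \<forall>s. s = phi p a \<longrightarrow>
          s * rpow (f p s) (a / s) / (rpow a (a / s) * rpow (s - a) (1 - a / s))
          = s / (s - a) * rpow ((1 - s) / ((1 - p) * (2 - s))) a)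
     \<and> strict_mono_on {0..1} (phi p)
     \<and> (\<forall>a\<in>{0<..<1}. phi p differentiable (at a))
     \<and> bij_betw (phi p) {0..1} {0..1}
     \<and> strict_mono_on {0..1} (the_inv_into {0..1} (phi p))
     \<and> (\<forall>s\<in>{0,1}. the_inv_into {0..1} (phi p) s = s)
     \<and> (\<forall>s\<in>{0<..<1}. 0 < the_inv_into {0..1} (phi p) s
            \<and> the_inv_into {0..1} (phi p) s < s \<and> s < 1)"
proof -
  note h = assms
  show ?thesis
  proof (intro conjI ballI allI impI)
    fix a :: real assume "a \<in> {0..1}" thus "\<exists>!s. s \<in> {a..1} \<and> Phi p a s = 0" using uniq[OF h] by auto
  next
    fix a :: real assume "a \<in> {0,1}" thus "phi p a = a"
      using phi_psi[OF h, of 0] phi_psi[OF h, of 1] psi0[OF h] psi1[OF h] by auto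
  next
    fix a :: real assume "a \<in> {0<..<1}" thus "0 < a" "a < phi p a" "phi p a < 1" using phi_open[OF h, of a] by auto
  next
    fix a s :: real assume "a \<in> {0<..<1}" "s = phi p a"
    thus "s * rpow (f p s) (a / s) / (rpow a (a / s) * rpow (s - a) (1 - a / s))
          = s / (s - a) * rpow ((1 - s) / ((1 - p) * (2 - s))) a" using partb[OF h, of a s] by auto
  next
    show "strict_mono_on {0..1} (phi p)" by (rule phi_smono[OF h])
  next
    fix a :: real assume "a \<in> {0<..<1}" thus "phi p differentiable (at a)" using phi_diff[OF h, of a] by auto
  next
    show "bij_betw (phi p) {0..1} {0..1}" by (rule phi_bij[OF h])
  next
    show "strict_mono_on {0..1} (the_inv_into {0..1} (phi p))"
    proof (rule strict_mono_onI)
      fix r s :: real assume r: "r \<in> {0..1}" "s \<in> {0..1}" "r < s"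
      thus "the_inv_into {0..1} (phi p) r < the_inv_into {0..1} (phi p) s"
        using inv_eq[OF h] psi_mono[OF h, of r s] by auto
    qed
  next
    fix s :: real assume "s \<in> {0,1}" thus "the_inv_into {0..1} (phi p) s = s"
      using inv_eq[OF h, of s] psi0[OF h] psi1[OF h] by auto
  next
    fix s :: real assume s: "s \<in> {0<..<1}"
    thus "0 < the_inv_into {0..1} (phi p) s" "the_inv_into {0..1} (phi p) s < s" "s < 1"
      using inv_eq[OF h, of s] psi_lt[OF h, of s] by auto
  qed
qed

end
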